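(* Let $a,\lambda\in\mathbb C$ satisfy $|\lambda|<1$ and $|a-\bar a\lambda|\le 1-|\lambda|^2$, let $c>0$, and let $F:\mathbb D\to\mathbb C$ be a holomorphic function with \[ F'(z)=\frac{c}{1+az+\lambda z^2},\qquad z\in\mathbb D. \] Then $F$ maps $\mathbb D$ biholomorphically onto the convex domain $D=F(\mathbb D)$. If in addition $|a-\bar a\lambda|<1-|\lambda|^2$, then $D=F(\mathbb D)$ is a bounded strongly convex domain.
   Context: $\mathbb D=\{z\in\mathbb C:|z|<1\}$. *)

theory Defs
  imports "HOL-Complex_Analysis.Complex_Analysis"
begin

definition C2_with_partials ::
  "complex set \<Rightarrow> (complex \<Rightarrow> real) \<Rightarrow> (complex \<Rightarrow> real) \<Rightarrow> (complex \<Rightarrow> real)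
   \<Rightarrow> (complex \<Rightarrow> real) \<Rightarrow> (complex \<Rightarrow> real) \<Rightarrow> (complex \<Rightarrow> real) \<Rightarrow> bool" where
  "C2_with_partials U r rx ry rxx rxy ryy \<longleftrightarrow>
     open U \<and>
     (\<forall>z\<in>U. (r has_derivative (\<lambda>h. rx z * Re h + ry z * Im h)) (at z)) \<and>
     (\<forall>z\<in>U. (rx has_derivative (\<lambda>h. rxx z * Re h + rxy z * Im h)) (at z)) \<and>
     (\<forall>z\<in>U. (ry has_derivative (\<lambda>h. rxy z * Re h + ryy z * Im h)) (at z)) \<and>
     continuous_on U rxx \<and> continuous_on U rxy \<and> continuous_on U ryy"

text \<open>Strongly convex domain in the complex plane: a bounded convex domain with a C^2
  defining function whose gradient does not vanish on the boundary and whose real Hessian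
  is positive definite on the (real) tangent line at every boundary point
  (equivalently: C^2 boundary with strictly positive curvature).\<close>
definition strongly_convex :: "complex set \<Rightarrow> bool" where
  "strongly_convex D \<longleftrightarrow>
     open D \<and> connected D \<and> D \<noteq> {} \<and> bounded D \<and> convex D \<and>
     (\<exists>U r rx ry rxx rxy ryy.
        C2_with_partials U r rx ry rxx rxy ryy \<and>
        closure D \<subseteq> U \<and> D = {z\<in>U. r z < 0} \<and>
        (\<forall>z\<in>frontier D. r z = 0 \<and> (rx z, ry z) \<noteq> (0, 0) \<and>
           (\<forall>v w::real. (v, w) \<noteq> (0, 0) \<and> rx z * v + ry z * w = 0 \<longrightarrow>
              rxx z * v\<^sup>2 + 2 * rxy z * v * w + ryy z * w\<^sup>2 > 0)))"

end

theory Submission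
  imports Defs
begin

lemma key_id:
  fixes a l z :: complex
  shows "Re ((1 - l*z\<^sup>2) * cnj (1 + a*z + l*z\<^sup>2)) =
     1 - (norm l)\<^sup>2 * ((norm z)\<^sup>2)\<^sup>2 + Re ((a - of_real ((norm z)\<^sup>2) * cnj a * l) * z)"
  unfolding cmod_power2 by (simp add: power2_eq_square algebra_simps)

lemma key_eq:
  fixes a l :: complex and s :: real
  assumes "norm l < 1"
  shows "a - of_real s * cnj a * l =
     ((a - cnj a * l) * (1 - of_real (s * (norm l)\<^sup>2)) + cnj (a - cnj a * l) * l * (1 - of_real s)) / (1 - of_real ((norm l)\<^sup>2))"
proof -
  have m: "of_real ((norm l)\<^sup>2) = l * cnj l" using complex_norm_square by simp
  have ne: "1 - of_real ((norm l)\<^sup>2) \<noteq> (0::complex)"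
  proof
    assume "1 - of_real ((norm l)\<^sup>2) = (0::complex)"
    hence "(norm l)\<^sup>2 = 1" by (metis eq_iff_diff_eq_0 of_real_eq_1_iff)
    with assms show False by (simp add: power2_eq_square) (smt (verit) mult_less_cancel_left1 norm_ge_zero)
  qed
  have m2: "(complex_of_real (norm l))\<^sup>2 = l * cnj l" using complex_norm_square by simp
  show ?thesis using ne unfolding m by (simp add: field_simps m2)
qed

lemma key_ineq:
  fixes a l z :: complex
  assumes l: "norm l < 1" and b: "norm (a - cnj a * l) \<le> 1 - (norm l)\<^sup>2" and z: "norm z \<le> 1"
    and alt: "norm z < 1 \<or> norm (a - cnj a * l) < 1 - (norm l)\<^sup>2"
  shows "Re ((1 - l*z\<^sup>2) * cnj (1 + a*z + l*z\<^sup>2)) > 0"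
proof -
  define m where "m = norm l"
  define t where "t = norm z"
  define B where "B = norm (a - cnj a * l)"
  have m0: "0 \<le> m" "m < 1" "0 \<le> t" "t \<le> 1" "0 \<le> B" "B \<le> 1 - m\<^sup>2"
    using l b z by (auto simp: m_def t_def B_def)
  have m2: "m\<^sup>2 < 1" using m0 by (simp add: power_less_one_iff abs_less_iff) 
  have id: "Re ((1 - l*z\<^sup>2) * cnj (1 + a*z + l*z\<^sup>2)) = 1 - m\<^sup>2 * (t\<^sup>2)\<^sup>2 + Re ((a - of_real (t\<^sup>2) * cnj a * l) * z)"
    using key_id[of l z a] by (simp add: m_def t_def)
  have re: "Re (w * z) \<ge> - (norm w * t)" for w
    using abs_Re_le_cmod[of "w*z"] by (simp add: t_def norm_mult)
  show ?thesis
  proof (cases "t < 1")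
    case True
    define K where "K = (1 - t\<^sup>2*m\<^sup>2) + m*(1-t\<^sup>2)"
    have t2: "t\<^sup>2 \<le> 1" using m0 by (simp add: power_le_one)
    have tm: "t\<^sup>2*m\<^sup>2 \<le> 1" using t2 m2 m0 by (simp add: mult_le_one)
    have K0: "K \<ge> 0" unfolding K_def using tm t2 m0 by simp
    have nn: "norm ((a - cnj a * l) * (1 - of_real (t\<^sup>2 * m\<^sup>2)) + cnj (a - cnj a * l) * l * (1 - of_real (t\<^sup>2)))
          \<le> B * K"
    proof -
      have "norm ((a - cnj a * l) * (1 - of_real (t\<^sup>2 * m\<^sup>2)) + cnj (a - cnj a * l) * l * (1 - of_real (t\<^sup>2)))
          \<le> norm ((a - cnj a * l) * (1 - of_real (t\<^sup>2 * m\<^sup>2))) + norm (cnj (a - cnj a * l) * l * (1 - of_real (t\<^sup>2)))"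
        by (rule norm_triangle_ineq)
      also have "\<dots> = B * (1 - t\<^sup>2*m\<^sup>2) + B * m * (1 - t\<^sup>2)"
      proof -
        have e1: "norm (1 - complex_of_real (t\<^sup>2 * m\<^sup>2)) = 1 - t\<^sup>2*m\<^sup>2"
          using tm by (metis abs_of_nonneg diff_ge_0_iff_ge norm_of_real of_real_1 of_real_diff)
        have e2: "norm (1 - complex_of_real (t\<^sup>2)) = 1 - t\<^sup>2"
          using t2 by (metis abs_of_nonneg diff_ge_0_iff_ge norm_of_real of_real_1 of_real_diff)
        show ?thesis by (simp only: norm_mult e1 e2 complex_mod_cnj B_def[symmetric] m_def[symmetric])
      qed
      finally show ?thesis by (simp add: K_def algebra_simps)
    qed
    have nq: "norm (a - of_real (t\<^sup>2) * cnj a * l) \<le> K"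
    proof -
      have e: "norm (1 - complex_of_real (m\<^sup>2)) = 1 - m\<^sup>2"
        using m2 by (metis abs_of_nonneg less_imp_le diff_ge_0_iff_ge norm_of_real of_real_1 of_real_diff)
      have "norm (a - of_real (t\<^sup>2) * cnj a * l) \<le> B * K / (1 - m\<^sup>2)"
        using key_eq[of l a "t\<^sup>2"] l nn m2 e unfolding m_def[symmetric]
        by (simp add: norm_divide divide_right_mono)
      also have "\<dots> \<le> K" using m0 m2 K0 mult_right_mono[OF m0(6) K0] by (simp add: divide_le_eq mult.commute)
      finally show ?thesis .
    qed
    have "Re ((1 - l*z\<^sup>2) * cnj (1 + a*z + l*z\<^sup>2)) \<ge> 1 - m\<^sup>2 * (t\<^sup>2)\<^sup>2 - K * t"
      using id re[of "a - of_real (t\<^sup>2) * cnj a * l"] nq m0 mult_right_mono[OF nq, of t] by linarith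
    moreover have "1 - m\<^sup>2 * (t\<^sup>2)\<^sup>2 - K * t = (1-t)*(1-m*t)*(1-m*t\<^sup>2)"
      unfolding K_def by (simp add: algebra_simps power2_eq_square)
    moreover have "(1-t)*(1-m*t)*(1-m*t\<^sup>2) > 0"
    proof -
      have "m*t \<le> m" using mult_left_mono[of t 1 m] m0 by simp
      hence "m*t < 1" using m0 by linarith
      moreover have "m*t\<^sup>2 \<le> m" using mult_left_mono[of "t\<^sup>2" 1 m] m0 t2 by simp
      hence "m*t\<^sup>2 < 1" using m0 by linarith
      ultimately show ?thesis using True by simp
    qed
    ultimately show ?thesis by linarith
  next
    case False
    hence t1: "t = 1" using m0 by simp
    hence "B < 1 - m\<^sup>2" using alt by (simp add: t_def B_def m_def)
    moreover have "Re ((1 - l*z\<^sup>2) * cnj (1 + a*z + l*z\<^sup>2)) \<ge> 1 - m\<^sup>2 - B"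
      using id re[of "a - cnj a * l"] t1 by (simp add: B_def)
    ultimately show ?thesis by linarith
  qed
qed

lemma exp_trig: "Re (\<i> * exp A * cnj (exp B)) = - (exp (Re A + Re B) * sin (Im A - Im B))"
proof -
  have "\<i> * exp A * cnj (exp B) = \<i> * exp (A + cnj B)" by (simp add: exp_cnj exp_add)
  hence "Re (\<i> * exp A * cnj (exp B)) = - Im (exp (A + cnj B))" by (simp only: Re_i_times)
  also have "\<dots> = - (exp (Re A + Re B) * sin (Im A - Im B))" by (simp only: Im_exp) simp
  finally show ?thesis .
qed

lemma Re_ofr: "Re (complex_of_real x * w) = x * Re w" by simp

lemma circle_neg:
  fixes f f1 f2 L :: "complex \<Rightarrow> complex" and R r t0 t :: real
  assumes r: "0 < r" "r < R"
    and df: "\<And>z. z \<in> ball 0 R \<Longrightarrow> (f has_field_derivative f1 z) (at z)"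
    and dL: "\<And>z. z \<in> ball 0 R \<Longrightarrow> (L has_field_derivative f2 z / f1 z) (at z)"
    and eL: "\<And>z. z \<in> ball 0 R \<Longrightarrow> exp (L z) = f1 z"
    and pos: "\<And>z. z \<in> ball 0 R \<Longrightarrow> Re (1 + z * f2 z / f1 z) > 0"
    and t: "t0 < t" "t < t0 + 2*pi"
  shows "Re ((f (r * exp (\<i> * t)) - f (r * exp (\<i> * t0))) * cnj (r * exp (\<i> * t0) * f1 (r * exp (\<i> * t0)))) < 0"
proof -
  define \<gamma> where "\<gamma> = (\<lambda>s::real. complex_of_real r * exp (\<i> * of_real s))"
  have \<gamma>in: "\<gamma> s \<in> ball 0 R" for s
    using r by (simp add: \<gamma>_def norm_mult)
  have d\<gamma>: "(\<gamma> has_vector_derivative (\<i> * \<gamma> s)) (at s)" for s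
  proof -
    have "((\<lambda>x::complex. of_real r * exp (\<i> * x)) has_field_derivative (\<i> * \<gamma> s)) (at (of_real s))"
      by (auto intro!: derivative_eq_intros simp: \<gamma>_def)
    from has_vector_derivative_real_field[OF this] show ?thesis by (simp add: \<gamma>_def)
  qed
  define N0 where "N0 = \<gamma> t0 * f1 (\<gamma> t0)"
  define g where "g = (\<lambda>s. Re ((f (\<gamma> s) - f (\<gamma> t0)) * cnj N0))"
  define \<psi> where "\<psi> = (\<lambda>s. s + Im (L (\<gamma> s)))"
  define E where "E = (\<lambda>s. \<i> * of_real s + L (\<gamma> s))"
  have dg: "DERIV g s :> Re (\<i> * \<gamma> s * f1 (\<gamma> s) * cnj N0)" for s
  proof -
    have "((\<lambda>w. (f w - f (\<gamma> t0)) * cnj N0) has_field_derivative f1 (\<gamma> s) * cnj N0) (at (\<gamma> s))"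
      using df[OF \<gamma>in[of s]] by (auto intro!: derivative_eq_intros)
    from field_vector_diff_chain_at[OF d\<gamma> this]
    have "((\<lambda>x. (f (\<gamma> x) - f (\<gamma> t0)) * cnj N0) has_vector_derivative \<i> * \<gamma> s * (f1 (\<gamma> s) * cnj N0)) (at s)"
      by (simp add: o_def)
    from has_field_derivative_Re[OF this] show ?thesis by (simp add: g_def mult.assoc)
  qed
  have d\<psi>: "DERIV \<psi> s :> Re (1 + \<gamma> s * f2 (\<gamma> s) / f1 (\<gamma> s))" for s
  proof -
    from field_vector_diff_chain_at[OF d\<gamma> dL[OF \<gamma>in[of s]]]
    have "((\<lambda>x. L (\<gamma> x)) has_vector_derivative \<i> * \<gamma> s * (f2 (\<gamma> s) / f1 (\<gamma> s))) (at s)"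
      by (simp add: o_def)
    from has_field_derivative_Im[OF this]
    have "DERIV (\<lambda>x. Im (L (\<gamma> x))) s :> Im (\<i> * \<gamma> s * (f2 (\<gamma> s) / f1 (\<gamma> s)))" .
    moreover have "Im (\<i> * \<gamma> s * (f2 (\<gamma> s) / f1 (\<gamma> s))) = Re (\<gamma> s * f2 (\<gamma> s) / f1 (\<gamma> s))"
      by (simp only: mult.assoc times_divide_eq_right[symmetric] Im_i_times)
    ultimately have "DERIV (\<lambda>x. Im (L (\<gamma> x))) s :> Re (\<gamma> s * f2 (\<gamma> s) / f1 (\<gamma> s))" by simp
    from DERIV_add[OF DERIV_ident this] show ?thesis
      unfolding \<psi>_def by simp
  qed
  have Nexp: "\<gamma> s * f1 (\<gamma> s) = of_real r * exp (E s)" for s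
    using eL[OF \<gamma>in[of s]] by (simp add: \<gamma>_def E_def exp_add)
  have Ims: "Im (E s) = \<psi> s" for s by (simp add: E_def \<psi>_def)
  define C where "C = (\<lambda>s. r\<^sup>2 * exp (Re (E s) + Re (E t0)))"
  have C0: "C s > 0" for s using r by (simp add: C_def)
  have dg': "Re (\<i> * \<gamma> s * f1 (\<gamma> s) * cnj N0) = - (C s * sin (\<psi> s - \<psi> t0))" for s
  proof -
    have "\<i> * \<gamma> s * f1 (\<gamma> s) * cnj N0 = of_real (r\<^sup>2) * (\<i> * exp (E s) * cnj (exp (E t0)))"
      unfolding N0_def by (simp add: mult.assoc Nexp) (simp add: power2_eq_square algebra_simps)
    hence "Re (\<i> * \<gamma> s * f1 (\<gamma> s) * cnj N0) = r\<^sup>2 * Re (\<i> * exp (E s) * cnj (exp (E t0)))"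
      by (simp only: Re_ofr)
    thus ?thesis unfolding exp_trig C_def Ims by simp
  qed
  have mono: "\<psi> a < \<psi> b" if "a < b" for a b
    using DERIV_pos_imp_increasing[OF that, of \<psi>] d\<psi> pos[OF \<gamma>in] by blast
  have per: "\<gamma> (t0 + 2*pi) = \<gamma> t0"
    by (simp add: \<gamma>_def distrib_left exp_add mult.commute)
  hence per\<psi>: "\<psi> (t0 + 2*pi) = \<psi> t0 + 2*pi" by (simp add: \<psi>_def)
  have g0: "g t0 = 0" "g (t0 + 2*pi) = 0" using per by (simp_all add: g_def)
  have "g t < 0"
  proof (cases "\<psi> t - \<psi> t0 \<le> pi")
    case True
    obtain \<xi> where \<xi>: "t0 < \<xi>" "\<xi> < t" "g t - g t0 = (t - t0) * Re (\<i> * \<gamma> \<xi> * f1 (\<gamma> \<xi>) * cnj N0)"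
      using MVT2[OF t(1) dg] by blast
    have "0 < \<psi> \<xi> - \<psi> t0" "\<psi> \<xi> - \<psi> t0 < pi" using mono[OF \<xi>(1)] mono[OF \<xi>(2)] True by auto
    hence "sin (\<psi> \<xi> - \<psi> t0) > 0" by (rule sin_gt_zero)
    hence "Re (\<i> * \<gamma> \<xi> * f1 (\<gamma> \<xi>) * cnj N0) < 0" using dg' C0[of \<xi>] by simp
    thus ?thesis using \<xi>(3) g0 t by (simp add: mult_pos_neg)
  next
    case False
    obtain \<xi> where \<xi>: "t < \<xi>" "\<xi> < t0 + 2*pi" "g (t0 + 2*pi) - g t = (t0 + 2*pi - t) * Re (\<i> * \<gamma> \<xi> * f1 (\<gamma> \<xi>) * cnj N0)"
      using MVT2[OF t(2) dg] by blast
    have "0 < \<psi> \<xi> - \<psi> t0 - pi" "\<psi> \<xi> - \<psi> t0 - pi < pi" using mono[OF \<xi>(1)] mono[OF \<xi>(2)] False per\<psi> by auto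
    hence "sin (\<psi> \<xi> - \<psi> t0 - pi) > 0" by (rule sin_gt_zero)
    hence "sin (\<psi> \<xi> - \<psi> t0) < 0" by simp
    hence "Re (\<i> * \<gamma> \<xi> * f1 (\<gamma> \<xi>) * cnj N0) > 0" using dg' C0[of \<xi>] by (simp add: mult_pos_neg)
    hence "(t0 + 2*pi - t) * Re (\<i> * \<gamma> \<xi> * f1 (\<gamma> \<xi>) * cnj N0) > 0" using t by (intro mult_pos_pos) auto
    thus ?thesis using \<xi>(3) g0 by linarith
  qed
  thus ?thesis by (simp add: g_def \<gamma>_def N0_def)
qed

lemma log_deriv:
  fixes f1 f2 :: "complex \<Rightarrow> complex" and R :: real
  assumes R: "0 < R"
    and df1: "\<And>z. z \<in> ball 0 R \<Longrightarrow> (f1 has_field_derivative f2 z) (at z)"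
    and nz: "\<And>z. z \<in> ball 0 R \<Longrightarrow> f1 z \<noteq> 0"
  obtains L where "\<And>z. z \<in> ball 0 R \<Longrightarrow> (L has_field_derivative f2 z / f1 z) (at z)"
    "\<And>z. z \<in> ball 0 R \<Longrightarrow> exp (L z) = f1 z"
proof -
  have hol: "f1 holomorphic_on ball 0 R"
    using df1 by (auto simp: holomorphic_on_open) blast
  obtain L where Lh: "L holomorphic_on ball 0 R" and eL: "\<And>x. x \<in> ball 0 R \<Longrightarrow> exp (L x) = f1 x"
    using holomorphic_logarithm_exists[OF convex_ball open_ball hol nz, of 0] R by auto
  have "(L has_field_derivative f2 z / f1 z) (at z)" if z: "z \<in> ball 0 R" for z
  proof -
    have dL: "(L has_field_derivative deriv L z) (at z)"
      using holomorphic_derivI[OF Lh open_ball z] .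
    have d1: "((\<lambda>w. exp (L w)) has_field_derivative exp (L z) * deriv L z) (at z)"
      using dL by (auto intro!: derivative_eq_intros)
    have d2: "((\<lambda>w. exp (L w)) has_field_derivative f2 z) (at z)"
      by (rule has_field_derivative_transform_within_open[OF df1[OF z] open_ball z]) (simp add: eL)
    have "exp (L z) * deriv L z = f2 z" using DERIV_unique[OF d1 d2] .
    hence "deriv L z = f2 z / f1 z" using eL[OF z] nz[OF z] by (simp add: field_simps)
    thus ?thesis using dL by simp
  qed
  thus ?thesis using that eL by blast
qed

lemma core:
  fixes f f1 f2 L :: "complex \<Rightarrow> complex" and R r :: real
  assumes r: "0 < r" "r < R"
    and df: "\<And>z. z \<in> ball 0 R \<Longrightarrow> (f has_field_derivative f1 z) (at z)"
    and dL: "\<And>z. z \<in> ball 0 R \<Longrightarrow> (L has_field_derivative f2 z / f1 z) (at z)"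
    and eL: "\<And>z. z \<in> ball 0 R \<Longrightarrow> exp (L z) = f1 z"
    and pos: "\<And>z. z \<in> ball 0 R \<Longrightarrow> Re (1 + z * f2 z / f1 z) > 0"
    and \<zeta>: "norm \<zeta> = r" and z: "norm z \<le> r" "z \<noteq> \<zeta>"
  shows "Re ((f z - f \<zeta>) * cnj (\<zeta> * f1 \<zeta>)) < 0"
proof -
  have circ: "Re ((f w - f \<zeta>) * cnj (\<zeta> * f1 \<zeta>)) < 0" if w: "norm w = r" "w \<noteq> \<zeta>" for w
  proof -
    have z0: "\<zeta> \<noteq> 0" "w \<noteq> 0" using r \<zeta> w by auto
    have e1: "\<zeta> = of_real r * exp (\<i> * of_real (Arg \<zeta>))" using Arg_eq[OF z0(1)] \<zeta> by simp
    have e2: "w = of_real r * exp (\<i> * of_real (Arg w))" using Arg_eq[OF z0(2)] w by simp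
    have ne: "Arg w \<noteq> Arg \<zeta>" using e1 e2 w(2) by auto
    have b: "- pi < Arg w" "Arg w \<le> pi" "- pi < Arg \<zeta>" "Arg \<zeta> \<le> pi" using Arg_bounded by auto
    obtain t where t: "Arg \<zeta> < t" "t < Arg \<zeta> + 2*pi" "w = of_real r * exp (\<i> * of_real t)"
    proof (cases "Arg w > Arg \<zeta>")
      case True thus ?thesis using that[of "Arg w"] b e2 by auto
    next
      case False
      have "exp (\<i> * of_real (Arg w + 2*pi)) = exp (\<i> * of_real (Arg w))"
        by (simp add: distrib_left exp_add mult.commute)
      thus ?thesis using that[of "Arg w + 2*pi"] False ne b e2 by auto
    qed
    show ?thesis
      using circle_neg[OF r df dL eL pos t(1,2)] e1 t(3) by simp
  qed
  show ?thesis
  proof (cases "norm z = r")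
    case True thus ?thesis using circ z by blast
  next
    case False
    hence zin: "z \<in> ball 0 r" using z by simp
    define h where "h = (\<lambda>w. (f w - f \<zeta>) * cnj (\<zeta> * f1 \<zeta>))"
    define \<Phi> where "\<Phi> = (\<lambda>w. exp (h w))"
    have sub: "cball 0 r \<subseteq> ball 0 R" using r by auto
    have dh: "(h has_field_derivative f1 w * cnj (\<zeta> * f1 \<zeta>)) (at w)" if "w \<in> ball 0 R" for w
      unfolding h_def using df[OF that] by (auto intro!: derivative_eq_intros)
    have d\<Phi>: "(\<Phi> has_field_derivative exp (h w) * (f1 w * cnj (\<zeta> * f1 \<zeta>))) (at w)" if "w \<in> ball 0 R" for w
      unfolding \<Phi>_def using dh[OF that] by (auto intro!: derivative_eq_intros)
    have holR: "\<Phi> holomorphic_on ball 0 R" using d\<Phi> by (auto simp: holomorphic_on_open) blast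
    have hol: "\<Phi> holomorphic_on ball 0 r" using holomorphic_on_subset[OF holR] sub ball_subset_cball by blast
    have cont: "continuous_on (cball 0 r) \<Phi>"
      using holomorphic_on_imp_continuous_on[OF holR] continuous_on_subset sub by blast
    have fr: "norm (\<Phi> w) \<le> 1" if "w \<in> sphere 0 r" for w
    proof -
      have "Re (h w) \<le> 0" using circ[of w] that by (cases "w = \<zeta>") (auto simp: h_def)
      thus ?thesis by (simp add: \<Phi>_def)
    qed
    have le: "norm (\<Phi> w) \<le> 1" if "w \<in> ball 0 r" for w
      using maximum_modulus_frontier[of \<Phi> "ball 0 r" 1 w] hol cont fr r that by simp
    have "Re (h z) \<le> 0" using le[OF zin] by (simp add: \<Phi>_def)
    moreover have "Re (h z) \<noteq> 0"
    proof
      assume "Re (h z) = 0"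
      hence n1: "norm (\<Phi> z) = 1" by (simp add: \<Phi>_def)
      have "\<Phi> constant_on ball 0 r"
        using maximum_modulus_principle[of \<Phi> "ball 0 r" "ball 0 r" z] hol zin le n1 by simp
      then obtain c where c: "\<And>w. w \<in> ball 0 r \<Longrightarrow> \<Phi> w = c" by (auto simp: constant_on_def)
      have "((\<lambda>w. c) has_field_derivative 0) (at z)" by simp
      hence "(\<Phi> has_field_derivative 0) (at z)"
        by (rule has_field_derivative_transform_within_open[OF _ open_ball zin]) (simp add: c)
      moreover have "z \<in> ball 0 R" using zin r by simp
      ultimately have "exp (h z) * (f1 z * cnj (\<zeta> * f1 \<zeta>)) = 0"
        using d\<Phi>[of z] DERIV_unique by blast
      moreover have "\<zeta> \<in> ball 0 R" using \<zeta> r by simp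
      moreover have "z \<in> ball 0 R" using zin r by simp
      ultimately have "f1 z = 0 \<or> f1 \<zeta> = 0 \<or> \<zeta> = 0" by auto
      moreover have "f1 z \<noteq> 0" using eL[of z] \<open>z \<in> ball 0 R\<close> by (metis exp_not_eq_zero)
      moreover have "f1 \<zeta> \<noteq> 0" using eL[of \<zeta>] \<open>\<zeta> \<in> ball 0 R\<close> by (metis exp_not_eq_zero)
      moreover have "\<zeta> \<noteq> 0" using \<zeta> r by auto
      ultimately show False by simp
    qed
    ultimately show ?thesis by (simp add: h_def)
  qed
qed

lemma convex_univalent:
  fixes f f1 f2 :: "complex \<Rightarrow> complex" and R :: real
  assumes R: "0 < R"
    and df: "\<And>z. z \<in> ball 0 R \<Longrightarrow> (f has_field_derivative f1 z) (at z)"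
    and df1: "\<And>z. z \<in> ball 0 R \<Longrightarrow> (f1 has_field_derivative f2 z) (at z)"
    and nz: "\<And>z. z \<in> ball 0 R \<Longrightarrow> f1 z \<noteq> 0"
    and pos: "\<And>z. z \<in> ball 0 R \<Longrightarrow> Re (1 + z * f2 z / f1 z) > 0"
  shows "inj_on f (ball 0 R) \<and> convex (f ` ball 0 R)"
proof -
  obtain L where dL: "\<And>z. z \<in> ball 0 R \<Longrightarrow> (L has_field_derivative f2 z / f1 z) (at z)"
    and eL: "\<And>z. z \<in> ball 0 R \<Longrightarrow> exp (L z) = f1 z"
    using log_deriv[OF R df1 nz] by blast
  note cr = core[OF _ _ df dL eL pos]
  have key: "f z1 \<noteq> f z2" if "z1 \<in> ball 0 R" "z2 \<in> ball 0 R" "norm z1 \<le> norm z2" "z1 \<noteq> z2" for z1 z2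
  proof
    assume e: "f z1 = f z2"
    have "norm z2 > 0" using that by (auto simp: order.order_iff_strict)
    hence "Re ((f z1 - f z2) * cnj (z2 * f1 z2)) < 0"
      using cr[where r="norm z2" and \<zeta>=z2 and z=z1] that by simp
    thus False using e by simp
  qed
  have inj: "inj_on f (ball 0 R)"
  proof (rule inj_onI)
    fix x y assume "x \<in> ball 0 R" "y \<in> ball 0 R" "f x = f y"
    thus "x = y" using key[of x y] key[of y x] by (cases "norm x \<le> norm y") auto
  qed
  have hol: "f holomorphic_on ball 0 R" using df by (auto simp: holomorphic_on_open) blast
  define H where "H = (\<lambda>r. {w. \<forall>\<zeta>\<in>sphere 0 r. Re ((w - f \<zeta>) * cnj (\<zeta> * f1 \<zeta>)) < 0})"
  have convH: "convex (H r)" for r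
  proof (rule convexI)
    fix x y u v assume x: "x \<in> H r" and y: "y \<in> H r" and uv0: "0 \<le> u" "0 \<le> v" "u + v = (1::real)"
    have uv: "0 \<le> u \<and> 0 \<le> v \<and> u + v = (1::real)" using uv0 by simp
    show "u *\<^sub>R x + v *\<^sub>R y \<in> H r" unfolding H_def
    proof (intro CollectI ballI)
      fix \<zeta> :: complex assume \<zeta>: "\<zeta> \<in> sphere 0 r"
      define K where "K = cnj (\<zeta> * f1 \<zeta>)"
      have A: "Re ((x - f \<zeta>) * K) < 0" "Re ((y - f \<zeta>) * K) < 0" using x y \<zeta> by (auto simp: H_def K_def)
      have "(u *\<^sub>R x + v *\<^sub>R y - f \<zeta>) * K = of_real u * ((x - f \<zeta>) * K) + of_real v * ((y - f \<zeta>) * K)"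
      proof -
        have "f \<zeta> = of_real u * f \<zeta> + of_real v * f \<zeta>"
          using uv by (metis distrib_right mult_1 of_real_1 of_real_add)
        hence "u *\<^sub>R x + v *\<^sub>R y - f \<zeta> = of_real u * (x - f \<zeta>) + of_real v * (y - f \<zeta>)"
          by (simp add: scaleR_conv_of_real algebra_simps)
        show ?thesis unfolding \<open>u *\<^sub>R x + v *\<^sub>R y - f \<zeta> = _\<close> by (simp add: algebra_simps)
      qed
      hence "Re ((u *\<^sub>R x + v *\<^sub>R y - f \<zeta>) * K) = u * Re ((x - f \<zeta>) * K) + v * Re ((y - f \<zeta>) * K)"
        by (simp only: Re_ofr plus_complex.sel)
      moreover have "u * Re ((x - f \<zeta>) * K) + v * Re ((y - f \<zeta>) * K) < 0"
      proof (cases "u = 0")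
        case True thus ?thesis using uv A by simp
      next
        case False
        hence "u * Re ((x - f \<zeta>) * K) < 0" using uv A by (simp add: mult_pos_neg)
        moreover have "v * Re ((y - f \<zeta>) * K) \<le> 0" using uv A by (simp add: mult_nonneg_nonpos)
        ultimately show ?thesis by linarith
      qed
      ultimately show "Re ((u *\<^sub>R x + v *\<^sub>R y - f \<zeta>) * cnj (\<zeta> * f1 \<zeta>)) < 0" by (simp add: K_def)
    qed
  qed
  have img: "f ` ball 0 r = H r" if r: "0 < r" "r < R" for r
  proof -
    have sub: "cball 0 r \<subseteq> ball 0 R" using r by auto
    have s1: "f ` ball 0 r \<subseteq> H r"
    proof
      fix w assume "w \<in> f ` ball 0 r"
      then obtain z where z: "norm z < r" "w = f z" by auto
      show "w \<in> H r" unfolding H_def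
      proof (intro CollectI ballI)
        fix \<zeta> :: complex assume \<zeta>: "\<zeta> \<in> sphere 0 r"
        hence "z \<noteq> \<zeta>" "norm \<zeta> = r" "norm z \<le> r" using z by auto
        thus "Re ((w - f \<zeta>) * cnj (\<zeta> * f1 \<zeta>)) < 0"
          using cr[OF r, where z=z and \<zeta>=\<zeta>] z(2) by blast
      qed
    qed
    have op: "open (f ` ball 0 r)"
    proof -
      have bsub: "ball 0 r \<subseteq> ball 0 R" using r by auto
      show ?thesis by (rule open_mapping_thm3[OF holomorphic_on_subset[OF hol bsub] open_ball inj_on_subset[OF inj bsub]])
    qed
    have cl: "closed (f ` cball 0 r)"
    proof -
      have "continuous_on (cball 0 r) f"
        using holomorphic_on_imp_continuous_on[OF hol] continuous_on_subset sub by blast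
      thus ?thesis by (intro compact_imp_closed compact_continuous_image compact_cball)
    qed
    have eq: "f ` ball 0 r = H r \<inter> f ` cball 0 r"
    proof
      show "f ` ball 0 r \<subseteq> H r \<inter> f ` cball 0 r" using s1 by auto
    next
      show "H r \<inter> f ` cball 0 r \<subseteq> f ` ball 0 r"
      proof
        fix w assume w: "w \<in> H r \<inter> f ` cball 0 r"
        then obtain u where u: "norm u \<le> r" "w = f u" by auto
        have "norm u \<noteq> r"
        proof
          assume "norm u = r"
          hence "Re ((w - f u) * cnj (u * f1 u)) < 0" using w by (auto simp: H_def)
          thus False using u by simp
        qed
        thus "w \<in> f ` ball 0 r" using u by auto
      qed
    qed
    have "f ` ball 0 r = {} \<or> f ` ball 0 r = H r"
      using convex_connected[OF convH[of r]] unfolding connected_clopen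
      using open_subset[OF s1 op] closedin_closed_Int[OF cl, of "H r"] eq by metis
    moreover have "f 0 \<in> f ` ball 0 r" using r by auto
    ultimately show ?thesis by blast
  qed
  have "convex (f ` ball 0 R)"
  proof (rule convexI)
    fix x y u v assume x: "x \<in> f ` ball 0 R" and y: "y \<in> f ` ball 0 R" and uv0: "0 \<le> u" "0 \<le> v" "u + v = (1::real)"
    have uv: "0 \<le> u \<and> 0 \<le> v \<and> u + v = (1::real)" using uv0 by simp
    obtain z1 z2 where z: "norm z1 < R" "norm z2 < R" "x = f z1" "y = f z2" using x y by auto
    define M where "M = max (norm z1) (norm z2)"
    have m: "M < R" "0 \<le> M" "norm z1 \<le> M" "norm z2 \<le> M" using z by (auto simp: M_def le_max_iff_disj)
    define r where "r = (M + R) / 2"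
    have r: "0 < r" "r < R" "norm z1 < r" "norm z2 < r" using m by (simp_all add: r_def)
    have "x \<in> H r" "y \<in> H r" using img[OF r(1,2)] r z by auto
    hence "u *\<^sub>R x + v *\<^sub>R y \<in> H r" using convH[of r] uv unfolding convex_def by blast
    hence "u *\<^sub>R x + v *\<^sub>R y \<in> f ` ball 0 r" using img[OF r(1,2)] by simp
    thus "u *\<^sub>R x + v *\<^sub>R y \<in> f ` ball 0 R" using r by auto
  qed
  with inj show ?thesis by simp
qed

lemma Re_ofr': "Re (complex_of_real x * w) = x * Re w" by simp

lemma C2_lemma:
  fixes G g g1 :: "complex \<Rightarrow> complex"
  assumes U: "open U"
    and dG: "\<And>w. w \<in> U \<Longrightarrow> (G has_field_derivative g w) (at w)"
    and dg: "\<And>w. w \<in> U \<Longrightarrow> (g has_field_derivative g1 w) (at w)"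
    and cg1: "continuous_on U g1"
  shows "C2_with_partials U (\<lambda>w. (cmod (G w))\<^sup>2 - 1)
     (\<lambda>w. 2 * Re (cnj (G w) * g w)) (\<lambda>w. - 2 * Im (cnj (G w) * g w))
     (\<lambda>w. 2 * (cmod (g w))\<^sup>2 + 2 * Re (cnj (G w) * g1 w))
     (\<lambda>w. - 2 * Im (cnj (G w) * g1 w))
     (\<lambda>w. 2 * (cmod (g w))\<^sup>2 - 2 * Re (cnj (G w) * g1 w))"
proof -
  have cG: "continuous_on U G"
    using dG by (meson DERIV_isCont continuous_at_imp_continuous_on)
  have cg: "continuous_on U g"
    using dg by (meson DERIV_isCont continuous_at_imp_continuous_on)
  have d1: "((\<lambda>w. (cmod (G w))\<^sup>2 - 1) has_derivative
      (\<lambda>h. 2 * Re (cnj (G z) * g z) * Re h + - 2 * Im (cnj (G z) * g z) * Im h)) (at z)" if z: "z \<in> U" for z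
  proof -
    have D: "(G has_derivative (\<lambda>h. h * g z)) (at z)"
      using dG[OF z] unfolding has_field_derivative_def by (simp add: mult.commute[of _ "g z"] mult.commute[of _ "g1 z"])
    have "((\<lambda>w. Re (cnj (G w) * G w) - 1) has_derivative
        (\<lambda>h. Re (cnj (G z) * (h * g z) + cnj (h * g z) * G z) - 0)) (at z)"
      by (intro has_derivative_diff has_derivative_Re has_derivative_mult has_derivative_cnj D has_derivative_const)
    moreover have "(\<lambda>w. Re (cnj (G w) * G w) - 1) = (\<lambda>w. (cmod (G w))\<^sup>2 - 1)"
      by (rule ext) (simp only: cmod_power2, simp add: power2_eq_square)
    moreover have "(\<lambda>h. Re (cnj (G z) * (h * g z) + cnj (h * g z) * G z) - 0) =
        (\<lambda>h. 2 * Re (cnj (G z) * g z) * Re h + - 2 * Im (cnj (G z) * g z) * Im h)"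
      by (rule ext) (simp add: algebra_simps)
    ultimately show ?thesis by simp
  qed
  have d2: "((\<lambda>w. 2 * Re (cnj (G w) * g w)) has_derivative
      (\<lambda>h. (2 * (cmod (g z))\<^sup>2 + 2 * Re (cnj (G z) * g1 z)) * Re h + - 2 * Im (cnj (G z) * g1 z) * Im h)) (at z)"
    if z: "z \<in> U" for z
  proof -
    have D: "(G has_derivative (\<lambda>h. h * g z)) (at z)"
      using dG[OF z] unfolding has_field_derivative_def by (simp add: mult.commute[of _ "g z"] mult.commute[of _ "g1 z"])
    have D1: "(g has_derivative (\<lambda>h. h * g1 z)) (at z)"
      using dg[OF z] unfolding has_field_derivative_def by (simp add: mult.commute[of _ "g z"] mult.commute[of _ "g1 z"])
    have "((\<lambda>w. 2 * Re (cnj (G w) * g w)) has_derivative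
        (\<lambda>h. 2 * Re (cnj (G z) * (h * g1 z) + cnj (h * g z) * g z))) (at z)"
      by (intro has_derivative_mult_right has_derivative_Re has_derivative_mult has_derivative_cnj D D1)
    moreover have "(\<lambda>h. 2 * Re (cnj (G z) * (h * g1 z) + cnj (h * g z) * g z)) =
      (\<lambda>h. (2 * (cmod (g z))\<^sup>2 + 2 * Re (cnj (G z) * g1 z)) * Re h + - 2 * Im (cnj (G z) * g1 z) * Im h)"
      by (rule ext) (simp only: cmod_power2, simp add: algebra_simps power2_eq_square)
    ultimately show ?thesis by simp
  qed
  have d3: "((\<lambda>w. - 2 * Im (cnj (G w) * g w)) has_derivative
      (\<lambda>h. - 2 * Im (cnj (G z) * g1 z) * Re h + (2 * (cmod (g z))\<^sup>2 - 2 * Re (cnj (G z) * g1 z)) * Im h)) (at z)"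
    if z: "z \<in> U" for z
  proof -
    have D: "(G has_derivative (\<lambda>h. h * g z)) (at z)"
      using dG[OF z] unfolding has_field_derivative_def by (simp add: mult.commute[of _ "g z"] mult.commute[of _ "g1 z"])
    have D1: "(g has_derivative (\<lambda>h. h * g1 z)) (at z)"
      using dg[OF z] unfolding has_field_derivative_def by (simp add: mult.commute[of _ "g z"] mult.commute[of _ "g1 z"])
    have "((\<lambda>w. - 2 * Im (cnj (G w) * g w)) has_derivative
        (\<lambda>h. - 2 * Im (cnj (G z) * (h * g1 z) + cnj (h * g z) * g z))) (at z)"
      by (intro has_derivative_mult_right has_derivative_Im has_derivative_mult has_derivative_cnj D D1)
    moreover have "(\<lambda>h. - 2 * Im (cnj (G z) * (h * g1 z) + cnj (h * g z) * g z)) =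
      (\<lambda>h. - 2 * Im (cnj (G z) * g1 z) * Re h + (2 * (cmod (g z))\<^sup>2 - 2 * Re (cnj (G z) * g1 z)) * Im h)"
      by (rule ext) (simp only: cmod_power2, simp add: algebra_simps power2_eq_square)
    ultimately show ?thesis by simp
  qed
  show ?thesis
    unfolding C2_with_partials_def
    using U d1 d2 d3 cG cg cg1 by (auto intro!: continuous_intros)
qed

lemma hess:
  fixes \<zeta> P P' :: complex and c v w :: real
  assumes \<zeta>: "norm \<zeta> = 1" and P: "P \<noteq> 0" and c: "c \<noteq> 0"
    and pos: "Re (1 - \<zeta> * P' / P) > 0"
    and vw: "(v, w) \<noteq> (0, 0)"
    and tan: "2 * Re (cnj \<zeta> * (P / c)) * v + - 2 * Im (cnj \<zeta> * (P / c)) * w = 0"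
  shows "(2 * (cmod (P / c))\<^sup>2 + 2 * Re (cnj \<zeta> * (P' * (P / c) / c))) * v\<^sup>2
     + 2 * (- 2 * Im (cnj \<zeta> * (P' * (P / c) / c))) * v * w
     + (2 * (cmod (P / c))\<^sup>2 - 2 * Re (cnj \<zeta> * (P' * (P / c) / c))) * w\<^sup>2 > 0"
proof -
  define g where "g = P / of_real c"
  define K where "K = cnj \<zeta> * (P' * g / of_real c)"
  define h where "h = Complex v w"
  define X where "X = cnj \<zeta> * g * h"
  have form: "(2 * (cmod g)\<^sup>2 + 2 * Re K) * v\<^sup>2 + 2 * (- 2 * Im K) * v * w + (2 * (cmod g)\<^sup>2 - 2 * Re K) * w\<^sup>2
      = 2 * (cmod g)\<^sup>2 * (cmod h)\<^sup>2 + 2 * Re (K * h\<^sup>2)"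
    unfolding cmod_power2 by (simp add: h_def power2_eq_square algebra_simps)
  have t0: "Re (cnj \<zeta> * g) * v - Im (cnj \<zeta> * g) * w = 0" using tan unfolding g_def by linarith
  have "Re X = Re (cnj \<zeta> * g) * v - Im (cnj \<zeta> * g) * w"
    unfolding X_def h_def by (simp only: times_complex.sel complex.sel)
  hence ReX: "Re X = 0" using t0 by simp
  have h0: "h \<noteq> 0" using vw by (simp add: h_def complex_eq_iff)
  have g0: "g \<noteq> 0" using P c by (simp add: g_def)
  have z0: "\<zeta> \<noteq> 0" using \<zeta> by auto
  have X0: "X \<noteq> 0" using h0 g0 z0 by (simp add: X_def)
  have zz: "\<zeta> * cnj \<zeta> = 1" using \<zeta> complex_norm_square[of \<zeta>] by simp
  have nX: "(cmod X)\<^sup>2 = (cmod g)\<^sup>2 * (cmod h)\<^sup>2" using \<zeta> by (simp add: X_def norm_mult power_mult_distrib)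
  have X2: "X\<^sup>2 = - of_real ((cmod X)\<^sup>2)"
    using ReX unfolding cmod_power2 by (simp add: complex_eq_iff power2_eq_square)
  have KX: "K * h\<^sup>2 = X\<^sup>2 * (\<zeta> * P' / P)"
  proof -
    have "X\<^sup>2 * (\<zeta> * P' / P) = cnj \<zeta> * (\<zeta> * cnj \<zeta>) * g * g * h\<^sup>2 * P' / P"
      by (simp add: X_def power2_eq_square algebra_simps)
    also have "\<dots> = cnj \<zeta> * g * g * h\<^sup>2 * P' / P" by (simp add: zz)
    also have "\<dots> = K * h\<^sup>2" using P c by (simp add: K_def g_def field_simps power2_eq_square)
    finally show ?thesis by simp
  qed
  have "Re (K * h\<^sup>2) = - (cmod X)\<^sup>2 * Re (\<zeta> * P' / P)"
    unfolding KX X2 by (simp only: mult_minus_left Re_ofr' uminus_complex.sel)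
  hence "2 * (cmod g)\<^sup>2 * (cmod h)\<^sup>2 + 2 * Re (K * h\<^sup>2) = 2 * (cmod X)\<^sup>2 * Re (1 - \<zeta> * P' / P)"
    using nX by (simp add: algebra_simps)
  moreover have "2 * (cmod X)\<^sup>2 * Re (1 - \<zeta> * P' / P) > 0" using X0 pos by simp
  ultimately show ?thesis using form by (simp add: g_def K_def)
qed

lemma Re_div_pos:
  fixes w q :: complex
  assumes "Re (w * cnj q) > 0"
  shows "q \<noteq> 0" "Re (w / q) > 0"
proof -
  show q: "q \<noteq> 0" using assms by auto
  have "w / q = w * cnj q / of_real ((cmod q)\<^sup>2)"
  proof -
    have e: "(complex_of_real (cmod q))\<^sup>2 = q * cnj q" using complex_norm_square[of q] by simp
    show ?thesis using q e by (simp add: field_simps)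
  qed
  hence "Re (w / q) = Re (w * cnj q) / (cmod q)\<^sup>2" by (simp add: Re_divide_of_real)
  thus "Re (w / q) > 0" using assms q by simp
qed

lemma poly_facts:
  fixes a l :: complex and c :: real and z :: complex
  assumes c: "c > 0" and pos: "Re ((1 - l*z\<^sup>2) * cnj (1 + a*z + l*z\<^sup>2)) > 0"
  shows "1 + a*z + l*z\<^sup>2 \<noteq> 0"
    "((\<lambda>z. of_real c / (1 + a*z + l*z\<^sup>2)) has_field_derivative
        - (of_real c * (a + 2*l*z)) / (1 + a*z + l*z\<^sup>2)\<^sup>2) (at z)"
    "of_real c / (1 + a*z + l*z\<^sup>2) \<noteq> 0"
    "Re (1 + z * (- (of_real c * (a + 2*l*z)) / (1 + a*z + l*z\<^sup>2)\<^sup>2) / (of_real c / (1 + a*z + l*z\<^sup>2))) > 0"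
proof -
  show p: "1 + a*z + l*z\<^sup>2 \<noteq> 0" using Re_div_pos(1)[OF pos] .
  have c0: "complex_of_real c \<noteq> 0" using c by simp
  show "((\<lambda>z. of_real c / (1 + a*z + l*z\<^sup>2)) has_field_derivative
        - (of_real c * (a + 2*l*z)) / (1 + a*z + l*z\<^sup>2)\<^sup>2) (at z)"
    using p by (auto intro!: derivative_eq_intros simp: field_simps power2_eq_square)
  show "of_real c / (1 + a*z + l*z\<^sup>2) \<noteq> 0" using p c0 by simp
  have "1 + z * (- (of_real c * (a + 2*l*z)) / (1 + a*z + l*z\<^sup>2)\<^sup>2) / (of_real c / (1 + a*z + l*z\<^sup>2))
      = (1 - l*z\<^sup>2) / (1 + a*z + l*z\<^sup>2)"
  proof -
    define P where "P = 1 + a*z + l*z\<^sup>2"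
    have P0: "P \<noteq> 0" using p by (simp add: P_def)
    have s1: "(- (of_real c * (a + 2*l*z)) / P\<^sup>2) / (of_real c / P) = - (a + 2*l*z) / P"
      using P0 c0 by (simp add: field_simps power2_eq_square)
    have s2: "1 + z * (- (a + 2*l*z) / P) = (1 - l*z\<^sup>2) / P"
      using P0 by (simp add: field_simps P_def power2_eq_square)
    show ?thesis unfolding P_def[symmetric] times_divide_eq_right[symmetric] s1 s2 ..
  qed
  thus "Re (1 + z * (- (of_real c * (a + 2*l*z)) / (1 + a*z + l*z\<^sup>2)\<^sup>2) / (of_real c / (1 + a*z + l*z\<^sup>2))) > 0"
    using Re_div_pos(2)[OF pos] by simp
qed

theorem lemma3p2:
  fixes a l :: complex and c :: real and F :: "complex \<Rightarrow> complex"
  assumes "norm l < 1"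
    and "norm (a - cnj a * l) \<le> 1 - (norm l)\<^sup>2"
    and "c > 0"
    and "F holomorphic_on ball 0 1"
    and "\<forall>z\<in>ball 0 1. deriv F z = of_real c / (1 + a * z + l * z\<^sup>2)"
  shows "inj_on F (ball 0 1) \<and> open (F ` ball 0 1) \<and>
         (\<exists>G. G holomorphic_on F ` ball 0 1 \<and> (\<forall>z\<in>ball 0 1. G (F z) = z)) \<and>
         convex (F ` ball 0 1) \<and>
         (norm (a - cnj a * l) < 1 - (norm l)\<^sup>2 \<longrightarrow>
            bounded (F ` ball 0 1) \<and> strongly_convex (F ` ball 0 1))"
proof -
  note l = assms(1) and ab = assms(2) and c = assms(3) and holF = assms(4) and dF = assms(5)
  define p where "p = (\<lambda>z::complex. 1 + a*z + l*z\<^sup>2)"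
  define f1 where "f1 = (\<lambda>z. of_real c / (1 + a*z + l*z\<^sup>2))"
  define f2 where "f2 = (\<lambda>z. - (of_real c * (a + 2*l*z)) / (1 + a*z + l*z\<^sup>2)\<^sup>2)"
  have c0: "complex_of_real c \<noteq> 0" using c by simp
  have gen: "p z \<noteq> 0 \<and> (f1 has_field_derivative f2 z) (at z) \<and> f1 z \<noteq> 0 \<and> Re (1 + z * f2 z / f1 z) > 0"
    if "Re ((1 - l*z\<^sup>2) * cnj (1 + a*z + l*z\<^sup>2)) > 0" for z
    using poly_facts[OF c that] unfolding p_def f1_def f2_def by blast
  have pos1: "Re ((1 - l*z\<^sup>2) * cnj (1 + a*z + l*z\<^sup>2)) > 0" if "z \<in> ball 0 1" for z
    using key_ineq[OF l ab] that by simp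
  have dF1: "(F has_field_derivative f1 z) (at z)" if "z \<in> ball 0 1" for z
    using holomorphic_derivI[OF holF open_ball that] dF that by (simp add: f1_def)
  have CU: "inj_on F (ball 0 1) \<and> convex (F ` ball 0 1)"
  proof (rule convex_univalent[of 1 F f1 f2])
    show "(0::real) < 1" by simp
    show "\<And>z. z \<in> ball 0 1 \<Longrightarrow> (F has_field_derivative f1 z) (at z)" by (rule dF1)
    show "\<And>z. z \<in> ball 0 1 \<Longrightarrow> (f1 has_field_derivative f2 z) (at z)" using gen[OF pos1] by blast
    show "\<And>z. z \<in> ball 0 1 \<Longrightarrow> f1 z \<noteq> 0" using gen[OF pos1] by blast
    show "\<And>z. z \<in> ball 0 1 \<Longrightarrow> 0 < Re (1 + z * f2 z / f1 z)" using gen[OF pos1] by blast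
  qed
  hence inj: "inj_on F (ball 0 1)" and cvx: "convex (F ` ball 0 1)" by auto
  have opn: "open (F ` ball 0 1)" by (rule open_mapping_thm3[OF holF open_ball inj])
  obtain G where "G holomorphic_on F ` ball 0 1" "\<And>z. z \<in> ball 0 1 \<Longrightarrow> G (F z) = z"
    using holomorphic_has_inverse[OF holF open_ball inj] by blast
  hence exG: "\<exists>G. G holomorphic_on F ` ball 0 1 \<and> (\<forall>z\<in>ball 0 1. G (F z) = z)" by blast
  have part2: "bounded (F ` ball 0 1) \<and> strongly_convex (F ` ball 0 1)"
    if strict: "norm (a - cnj a * l) < 1 - (norm l)\<^sup>2"
  proof -
    define B where "B = {z. 0 < Re ((1 - l*z\<^sup>2) * cnj (1 + a*z + l*z\<^sup>2))}"
    have h1: "continuous_on UNIV (\<lambda>z::complex. 1 - l*z\<^sup>2)"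
      by (rule continuous_on_diff continuous_on_const continuous_on_mult continuous_on_power continuous_on_id)+
    have h2: "continuous_on UNIV (\<lambda>z::complex. 1 + a*z + l*z\<^sup>2)"
      by (rule continuous_on_add continuous_on_const continuous_on_mult continuous_on_power continuous_on_id)+
    have cR: "continuous_on UNIV (\<lambda>z. Re ((1 - l*z\<^sup>2) * cnj (1 + a*z + l*z\<^sup>2)))"
      by (rule continuous_on_Re[OF continuous_on_mult[OF h1 continuous_on_cnj[OF h2]]])
    have oB: "open B" unfolding B_def
      by (rule open_Collect_less[OF continuous_on_const cR])
    have cB: "cball 0 1 \<subseteq> B" using key_ineq[OF l ab] strict by (auto simp: B_def)
    obtain \<epsilon> where \<epsilon>: "\<epsilon> > 0" "(\<Union>x\<in>cball 0 1. ball x \<epsilon>) \<subseteq> B"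
      using compact_subset_open_imp_ball_epsilon_subset[OF compact_cball oB cB] by blast
    define \<rho> where "\<rho> = 1 + \<epsilon>"
    have \<rho>: "\<rho> > 1" using \<epsilon> by (simp add: \<rho>_def)
    have bB: "ball 0 \<rho> \<subseteq> B"
    proof
      fix z :: complex assume z: "z \<in> ball 0 \<rho>"
      show "z \<in> B"
      proof (cases "norm z \<le> 1")
        case True thus ?thesis using cB by auto
      next
        case False
        define x where "x = z / of_real (norm z)"
        have nz: "norm z > 0" using False by (cases "z = 0") auto
        have x1: "x \<in> cball 0 1" using nz by (simp add: x_def norm_divide)
        have e: "x - z = of_real (1 / norm z - 1) * z" using nz by (simp add: x_def field_simps)
        have "dist x z = norm (of_real (1 / norm z - 1) * z)" by (simp only: dist_norm e)
        also have "\<dots> = \<bar>1 / norm z - 1\<bar> * norm z" by (simp only: norm_mult norm_of_real)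
        also have "\<dots> = (1 - 1 / norm z) * norm z" using False nz by (simp add: abs_if field_simps)
        also have "\<dots> = norm z - 1" using nz by (simp add: field_simps)
        finally have "dist x z < \<epsilon>" using z by (simp add: \<rho>_def)
        hence "z \<in> ball x \<epsilon>" by (simp add: mem_ball)
        hence "z \<in> (\<Union>x\<in>cball 0 1. ball x \<epsilon>)" using x1 by (rule UN_I[rotated])
        thus ?thesis using \<epsilon>(2) by (rule subsetD[rotated])
      qed
    qed
    have genB: "p z \<noteq> 0 \<and> (f1 has_field_derivative f2 z) (at z) \<and> f1 z \<noteq> 0 \<and> Re (1 + z * f2 z / f1 z) > 0"
      if "z \<in> ball 0 \<rho>" for z
    proof -
      have "z \<in> B" using bB that by blast
      hence "Re ((1 - l*z\<^sup>2) * cnj (1 + a*z + l*z\<^sup>2)) > 0" by (simp add: B_def)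
      thus ?thesis by (rule gen)
    qed
    have hol1: "f1 holomorphic_on ball 0 \<rho>"
      using genB by (auto simp: holomorphic_on_open) blast
    obtain F0 where F0: "\<And>x. x \<in> ball 0 \<rho> \<Longrightarrow> (F0 has_field_derivative f1 x) (at x within ball 0 \<rho>)"
      by (rule holomorphic_convex_primitive'[OF convex_ball open_ball hol1]) iprover
    have dF0: "(F0 has_field_derivative f1 x) (at x)" if "x \<in> ball 0 \<rho>" for x
      using F0[OF that] at_within_open[OF that open_ball] by simp
    have b1: "ball 0 1 \<subseteq> ball 0 \<rho>" using \<rho> by auto
    obtain C where C: "\<And>z. z \<in> ball 0 1 \<Longrightarrow> F z - F0 z = C"
    proof -
      have "\<exists>C. \<forall>z\<in>ball 0 1. F z - F0 z = C"
      proof (rule has_field_derivative_zero_constant[OF convex_ball])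
        fix x assume x: "x \<in> ball (0::complex) 1"
        have "((\<lambda>z. F z - F0 z) has_field_derivative f1 x - f1 x) (at x)"
          using DERIV_diff[OF dF1[OF x] dF0[of x]] x b1 by blast
        thus "((\<lambda>z. F z - F0 z) has_field_derivative 0) (at x within ball 0 1)"
          by (simp add: has_field_derivative_at_within)
      qed
      thus ?thesis using that by blast
    qed
    define Ft where "Ft = (\<lambda>z. F0 z + C)"
    have FtF: "Ft z = F z" if "z \<in> ball 0 1" for z by (simp add: Ft_def C[OF that, symmetric])
    have dFt: "(Ft has_field_derivative f1 z) (at z)" if "z \<in> ball 0 \<rho>" for z
      using DERIV_add[OF dF0[OF that] DERIV_const[of C]] unfolding Ft_def by simp
    have CU2: "inj_on Ft (ball 0 \<rho>) \<and> convex (Ft ` ball 0 \<rho>)"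
    proof (rule convex_univalent[of \<rho> Ft f1 f2])
      show "0 < \<rho>" using \<rho> by simp
      show "\<And>z. z \<in> ball 0 \<rho> \<Longrightarrow> (Ft has_field_derivative f1 z) (at z)" by (rule dFt)
      show "\<And>z. z \<in> ball 0 \<rho> \<Longrightarrow> (f1 has_field_derivative f2 z) (at z)" using genB by blast
      show "\<And>z. z \<in> ball 0 \<rho> \<Longrightarrow> f1 z \<noteq> 0" using genB by blast
      show "\<And>z. z \<in> ball 0 \<rho> \<Longrightarrow> 0 < Re (1 + z * f2 z / f1 z)" using genB by blast
    qed
    hence injFt: "inj_on Ft (ball 0 \<rho>)" by simp
    define D where "D = F ` ball 0 1"
    have DFt: "D = Ft ` ball 0 1" unfolding D_def using FtF by (auto simp: image_def) 
    have holFt: "Ft holomorphic_on ball 0 \<rho>" using dFt by (auto simp: holomorphic_on_open) blast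
    have cb: "cball 0 1 \<subseteq> ball 0 \<rho>" using \<rho> by auto
    have contFt: "continuous_on (cball 0 1) Ft"
      using holomorphic_on_imp_continuous_on[OF holFt] continuous_on_subset cb by blast
    have compK: "compact (Ft ` cball 0 1)" by (intro compact_continuous_image contFt compact_cball)
    have DK: "D \<subseteq> Ft ` cball 0 1" unfolding DFt by auto
    have bnd: "bounded D" using DK compact_imp_bounded[OF compK] bounded_subset by blast
    define U where "U = Ft ` ball 0 \<rho>"
    have oU: "open U" unfolding U_def by (rule open_mapping_thm3[OF holFt open_ball injFt])
    obtain G2 where G2h: "G2 holomorphic_on U"
      and G2d: "\<And>z. z \<in> ball 0 \<rho> \<Longrightarrow> deriv Ft z * deriv G2 (Ft z) = 1"
      and G2i: "\<And>z. z \<in> ball 0 \<rho> \<Longrightarrow> G2 (Ft z) = z"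
      using holomorphic_has_inverse[OF holFt open_ball injFt] unfolding U_def by blast
    define gg where "gg = (\<lambda>w. p (G2 w) / of_real c)"
    define g1 where "g1 = (\<lambda>w. (a + 2*l*G2 w) * gg w / of_real c)"
    have dG2: "(G2 has_field_derivative gg w) (at w)" if w: "w \<in> U" for w
    proof -
      obtain z where z: "z \<in> ball 0 \<rho>" "w = Ft z" using w by (auto simp: U_def)
      have "deriv Ft z = f1 z" using DERIV_imp_deriv[OF dFt[OF z(1)]] .
      hence "f1 z * deriv G2 w = 1" using G2d[OF z(1)] z by simp
      hence "deriv G2 w = p z / of_real c"
        using genB[OF z(1)] c0 by (simp add: f1_def p_def field_simps)
      moreover have "G2 w = z" using G2i[OF z(1)] z by simp
      ultimately show ?thesis using holomorphic_derivI[OF G2h oU w] by (simp add: gg_def)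
    qed
    have dgg: "(gg has_field_derivative g1 w) (at w)" if w: "w \<in> U" for w
    proof -
      have dp: "((\<lambda>z. 1 + a*z + l*z\<^sup>2) has_field_derivative (a + 2*l*G2 w)) (at (G2 w))"
        by (auto intro!: derivative_eq_intros)
      have "((\<lambda>x. 1 + a * G2 x + l * (G2 x)\<^sup>2) has_field_derivative (a + 2*l*G2 w) * gg w) (at w)"
        using DERIV_chain2[OF dp dG2[OF w]] .
      from DERIV_cdivide[OF this, of "of_real c"] show ?thesis by (simp add: gg_def g1_def p_def)
    qed
    have cG2: "continuous_on U G2" using G2h holomorphic_on_imp_continuous_on by blast
    have cp: "continuous_on U (\<lambda>w. 1 + a * G2 w + l * (G2 w)\<^sup>2)"
      by (intro continuous_on_add continuous_on_const continuous_on_mult continuous_on_power cG2)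
    have cg1: "continuous_on U g1"
    proof -
      have "continuous_on U (\<lambda>w. (a + 2*l*G2 w) * (1 + a * G2 w + l * (G2 w)\<^sup>2) * (1 / (of_real c * of_real c)))"
        by (intro continuous_on_add continuous_on_const continuous_on_mult cp cG2)
      moreover have "g1 = (\<lambda>w. (a + 2*l*G2 w) * (1 + a * G2 w + l * (G2 w)\<^sup>2) * (1 / (of_real c * of_real c)))"
        by (rule ext) (simp add: g1_def gg_def p_def)
      ultimately show ?thesis by simp
    qed
    note C2 = C2_lemma[OF oU dG2 dgg cg1]
    have KU: "Ft ` cball 0 1 \<subseteq> U" unfolding U_def using cb by auto
    have clD: "closure D \<subseteq> Ft ` cball 0 1"
      by (rule closure_minimal[OF DK compact_imp_closed[OF compK]])
    have Deq: "D = {w \<in> U. (cmod (G2 w))\<^sup>2 - 1 < 0}"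
    proof
      show "D \<subseteq> {w \<in> U. (cmod (G2 w))\<^sup>2 - 1 < 0}"
      proof
        fix w assume "w \<in> D"
        then obtain z where z: "norm z < 1" "w = Ft z" unfolding DFt by auto
        have zr: "z \<in> ball 0 \<rho>" using z \<rho> by simp
        have "(cmod z)\<^sup>2 < 1" using z by (simp add: power_less_one_iff abs_less_iff)
        thus "w \<in> {w \<in> U. (cmod (G2 w))\<^sup>2 - 1 < 0}" using G2i[OF zr] z zr by (auto simp: U_def)
      qed
    next
      show "{w \<in> U. (cmod (G2 w))\<^sup>2 - 1 < 0} \<subseteq> D"
      proof
        fix w assume w: "w \<in> {w \<in> U. (cmod (G2 w))\<^sup>2 - 1 < 0}"
        then obtain z where z: "z \<in> ball 0 \<rho>" "w = Ft z" by (auto simp: U_def)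
        have "(cmod z)\<^sup>2 < 1" using w G2i[OF z(1)] z by simp
        hence "cmod z < 1" by (simp add: power_less_one_iff abs_less_iff)
        thus "w \<in> D" unfolding DFt using z by auto
      qed
    qed
    have frD: "\<exists>\<zeta>. norm \<zeta> = 1 \<and> w = Ft \<zeta>" if "w \<in> frontier D" for w
    proof -
      have oD: "open D" using opn by (simp add: D_def)
      have "w \<in> closure D" "w \<notin> D" using that oD by (auto simp: frontier_def interior_open)
      then obtain \<zeta> where "norm \<zeta> \<le> 1" "w = Ft \<zeta>" using clD by auto
      moreover have "norm \<zeta> \<noteq> 1 \<Longrightarrow> w \<in> D" using calculation unfolding DFt by auto
      ultimately show ?thesis using \<open>w \<notin> D\<close> by blast
    qed
    have frc: "(cmod (G2 w))\<^sup>2 - 1 = 0 \<and>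
        (2 * Re (cnj (G2 w) * gg w), - 2 * Im (cnj (G2 w) * gg w)) \<noteq> (0, 0) \<and>
        (\<forall>v u::real. (v, u) \<noteq> (0, 0) \<and> 2 * Re (cnj (G2 w) * gg w) * v + - 2 * Im (cnj (G2 w) * gg w) * u = 0 \<longrightarrow>
           (2 * (cmod (gg w))\<^sup>2 + 2 * Re (cnj (G2 w) * g1 w)) * v\<^sup>2 + 2 * (- 2 * Im (cnj (G2 w) * g1 w)) * v * u
             + (2 * (cmod (gg w))\<^sup>2 - 2 * Re (cnj (G2 w) * g1 w)) * u\<^sup>2 > 0)"
      if w: "w \<in> frontier D" for w
    proof -
      obtain \<zeta> where \<zeta>: "norm \<zeta> = 1" "w = Ft \<zeta>" using frD[OF w] by blast
      have \<zeta>r: "\<zeta> \<in> ball 0 \<rho>" using \<zeta> \<rho> by simp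
      have G\<zeta>: "G2 w = \<zeta>" using G2i[OF \<zeta>r] \<zeta> by simp
      have "\<zeta> \<in> cball 0 1" using \<zeta> by simp
      hence "\<zeta> \<in> B" using cB by blast
      hence posz: "Re ((1 - l*\<zeta>\<^sup>2) * cnj (1 + a*\<zeta> + l*\<zeta>\<^sup>2)) > 0" unfolding B_def by simp
      have p0: "p \<zeta> \<noteq> 0" using genB[OF \<zeta>r] by blast
      have ppos: "Re (1 - \<zeta> * (a + 2*l*\<zeta>) / p \<zeta>) > 0"
      proof -
        have "1 - \<zeta> * (a + 2*l*\<zeta>) / p \<zeta> = (1 - l*\<zeta>\<^sup>2) / (1 + a*\<zeta> + l*\<zeta>\<^sup>2)"
          using p0 by (simp add: p_def field_simps power2_eq_square)
        thus ?thesis using Re_div_pos(2)[OF posz] by simp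
      qed
      have e1: "(cmod (G2 w))\<^sup>2 - 1 = 0" using G\<zeta> \<zeta> by simp
      have e2: "(2 * Re (cnj (G2 w) * gg w), - 2 * Im (cnj (G2 w) * gg w)) \<noteq> (0, 0)"
      proof
        assume "(2 * Re (cnj (G2 w) * gg w), - 2 * Im (cnj (G2 w) * gg w)) = (0, 0)"
        hence "cnj (G2 w) * gg w = 0" by (simp add: complex_eq_iff)
        moreover have "\<zeta> \<noteq> 0" using \<zeta> by auto
        ultimately show False using G\<zeta> p0 c0 by (simp add: gg_def)
      qed
      have e3: "(2 * (cmod (gg w))\<^sup>2 + 2 * Re (cnj (G2 w) * g1 w)) * v\<^sup>2 + 2 * (- 2 * Im (cnj (G2 w) * g1 w)) * v * u
             + (2 * (cmod (gg w))\<^sup>2 - 2 * Re (cnj (G2 w) * g1 w)) * u\<^sup>2 > 0"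
        if "(v, u) \<noteq> (0, 0)" "2 * Re (cnj (G2 w) * gg w) * v + - 2 * Im (cnj (G2 w) * gg w) * u = 0" for v u
        using hess[OF \<zeta>(1) p0 _ ppos, of c v u] that c G\<zeta> by (simp add: gg_def g1_def)
      show ?thesis using e1 e2 e3 by blast
    qed
    have sc: "strongly_convex D"
      unfolding strongly_convex_def
    proof (intro conjI)
      show "open D" using opn by (simp add: D_def)
      show "connected D" using convex_connected cvx by (simp add: D_def)
      show "D \<noteq> {}" by (simp add: D_def)
      show "bounded D" by (rule bnd)
      show "convex D" using cvx by (simp add: D_def)
      show "\<exists>U r rx ry rxx rxy ryy.
        C2_with_partials U r rx ry rxx rxy ryy \<and>
        closure D \<subseteq> U \<and> D = {z\<in>U. r z < 0} \<and>
        (\<forall>z\<in>frontier D. r z = 0 \<and> (rx z, ry z) \<noteq> (0, 0) \<and>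
           (\<forall>v w::real. (v, w) \<noteq> (0, 0) \<and> rx z * v + ry z * w = 0 \<longrightarrow>
              rxx z * v\<^sup>2 + 2 * rxy z * v * w + ryy z * w\<^sup>2 > 0))"
      proof -
        define rr where "rr = (\<lambda>w. (cmod (G2 w))\<^sup>2 - 1)"
        define rx where "rx = (\<lambda>w. 2 * Re (cnj (G2 w) * gg w))"
        define ry where "ry = (\<lambda>w. - 2 * Im (cnj (G2 w) * gg w))"
        define rxx where "rxx = (\<lambda>w. 2 * (cmod (gg w))\<^sup>2 + 2 * Re (cnj (G2 w) * g1 w))"
        define rxy where "rxy = (\<lambda>w. - 2 * Im (cnj (G2 w) * g1 w))"
        define ryy where "ryy = (\<lambda>w. 2 * (cmod (gg w))\<^sup>2 - 2 * Re (cnj (G2 w) * g1 w))"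
        have h1: "C2_with_partials U rr rx ry rxx rxy ryy"
          unfolding rr_def rx_def ry_def rxx_def rxy_def ryy_def by (rule C2)
        have h2: "closure D \<subseteq> U" using clD KU by (rule order_trans)
        have h3: "D = {z\<in>U. rr z < 0}" using Deq by (simp only: rr_def)
        have h4: "\<forall>z\<in>frontier D. rr z = 0 \<and> (rx z, ry z) \<noteq> (0, 0) \<and>
           (\<forall>v w::real. (v, w) \<noteq> (0, 0) \<and> rx z * v + ry z * w = 0 \<longrightarrow>
              rxx z * v\<^sup>2 + 2 * rxy z * v * w + ryy z * w\<^sup>2 > 0)"
        proof
          fix w assume w: "w \<in> frontier D"
          show "rr w = 0 \<and> (rx w, ry w) \<noteq> (0, 0) \<and>
           (\<forall>v u::real. (v, u) \<noteq> (0, 0) \<and> rx w * v + ry w * u = 0 \<longrightarrow>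
              rxx w * v\<^sup>2 + 2 * rxy w * v * u + ryy w * u\<^sup>2 > 0)"
            unfolding rr_def rx_def ry_def rxx_def rxy_def ryy_def using frc[OF w] by blast
        qed
        show ?thesis using h1 h2 h3 h4 by blast
      qed
    qed
    show ?thesis using bnd sc by (simp add: D_def)
  qed
  show ?thesis using inj opn exG cvx part2 by blast
qed


end
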